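(* Let $a,b\in[0,1]$ with $a+b>1$, $\bar a=1-a$, $\bar b=1-b$, and $\gamma=2^{\frac{H(b)-H(a)}{a+b-1}}$. Define the following sets of real numbers $\beta$: $\mathcal L_1=\{\max(\frac{\bar a}{\bar b}\gamma,\frac{\gamma(\bar a+b)-\sqrt{\gamma^2(\bar a+b)^2-4a\bar b}}{2\bar b})\le\beta\le\frac{\gamma(\bar a+b)+\sqrt{\gamma^2(\bar a+b)^2-4a\bar b}}{2\bar b}\}$, $\mathcal L_2=\{\frac{(a+\bar b)+\sqrt{(a+\bar b)^2-4\bar ab\gamma^2}}{2b\gamma}\le\beta\le\frac{\bar a}{\bar b}\gamma\}$, $\mathcal L_3=\{\beta\le\min(\frac{\bar a}{\bar b}\gamma,\frac{(a+\bar b)-\sqrt{(a+\bar b)^2-4\bar ab\gamma^2}}{2b\gamma})\}$, $\mathcal L_4=\{\beta\le\min(\frac{b\gamma}{a},\frac{\gamma(\bar a+b)-\sqrt{\gamma^2(\bar a+b)^2-4a\bar b}}{2a})\}$, $\mathcal L_5=\{\frac{\gamma(\bar a+b)+\sqrt{\gamma^2(\bar a+b)^2-4a\bar b}}{2a}\le\beta\le\frac{b\gamma}{a}\}$, $\mathcal L_6=\{\max(\frac{b\gamma}{a},\frac{(a+\bar b)-\sqrt{(a+\bar b)^2-4\bar ab\gamma^2}}{2\bar a\gamma})\le\beta\le\frac{(a+\bar b)+\sqrt{(a+\bar b)^2-4\bar ab\gamma^2}}{2\bar a\gamma}\}$, $\mathcal L_0=\{1\le\beta\le\min(\frac{a}{\bar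 a\gamma},\frac{b\gamma}{\bar b})\}$. If $(\mathcal L_1\cup\mathcal L_2\cup\mathcal L_3)\cap(\mathcal L_4\cup\mathcal L_5\cup\mathcal L_6)\cap\mathcal L_0\neq\emptyset$, then feedback does not increase the capacity of the POST$(a,b)$ channel, i.e. its capacity without feedback equals its feedback capacity.
   Context: $H(p)=-p\log_2p-(1-p)\log_2(1-p)$ is the binary entropy. The POST$(a,b)$ channel has binary inputs $X_i$ and outputs $Y_i$, with the previous output $Y_{i-1}$ as state. If $y_{i-1}=0$: $P(Y_i=0|X_i=0)=a$, $P(Y_i=0|X_i=1)=\bar b$; if $y_{i-1}=1$: $P(Y_i=0|X_i=0)=b$, $P(Y_i=0|X_i=1)=\bar a$. Feedback capacity: encoder observes all past outputs; capacity without feedback: encoder sees only the message. *)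

theory Defs
  imports Complex_Main
begin

definition bin_ent :: "real \<Rightarrow> real" where
  "bin_ent p = (if p = 0 \<or> p = 1 then 0 else - p * log 2 p - (1 - p) * log 2 (1 - p))"

text \<open>Bits are booleans, False = 0, True = 1. The state is the previous output;
  the initial state is y_0 = 0 (False).\<close>

definition post_W :: "real \<Rightarrow> real \<Rightarrow> bool \<Rightarrow> bool \<Rightarrow> bool \<Rightarrow> real" where
  "post_W a b s x y =
     (let p0 = (if \<not> s then (if \<not> x then a else 1 - b) else (if \<not> x then b else 1 - a))
      in if y then 1 - p0 else p0)"
  \<comment> \<open>P(Y_i = y | X_i = x, Y_{i-1} = s)\<close>

definition prev_out :: "bool list \<Rightarrow> nat \<Rightarrow> bool" where
  "prev_out ys i = (if i = 0 then False else ys ! (i - 1))"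

definition chan_prob :: "real \<Rightarrow> real \<Rightarrow> bool list \<Rightarrow> bool list \<Rightarrow> real" where
  "chan_prob a b xs ys = (\<Prod>i<length xs. post_W a b (prev_out ys i) (xs ! i) (ys ! i))"

definition blists :: "nat \<Rightarrow> bool list set" where
  "blists n = {xs. length xs = n}"

definition info_term :: "real \<Rightarrow> real \<Rightarrow> real" where
  "info_term p r = (if p = 0 then 0 else p * log 2 (p / r))"

definition input_dist :: "nat \<Rightarrow> (bool list \<Rightarrow> real) \<Rightarrow> bool" where
  "input_dist n p \<longleftrightarrow> (\<forall>xs\<in>blists n. 0 \<le> p xs) \<and> (\<Sum>xs\<in>blists n. p xs) = 1"

definition out_nf :: "real \<Rightarrow> real \<Rightarrow> nat \<Rightarrow> (bool list \<Rightarrow> real) \<Rightarrow> bool list \<Rightarrow> real" where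
  "out_nf a b n p ys = (\<Sum>xs\<in>blists n. p xs * chan_prob a b xs ys)"

definition mutual_info_nf :: "real \<Rightarrow> real \<Rightarrow> nat \<Rightarrow> (bool list \<Rightarrow> real) \<Rightarrow> real" where
  "mutual_info_nf a b n p =
     (\<Sum>xs\<in>blists n. \<Sum>ys\<in>blists n.
        info_term (p xs * chan_prob a b xs ys) (p xs * out_nf a b n p ys))"

definition post_Cnf_n :: "real \<Rightarrow> real \<Rightarrow> nat \<Rightarrow> real" where
  "post_Cnf_n a b n = Sup {mutual_info_nf a b n p / real n | p. input_dist n p}"

definition post_capacity_nf :: "real \<Rightarrow> real \<Rightarrow> real" where
  "post_capacity_nf a b = lim (post_Cnf_n a b)"

text \<open>A feedback encoder (causally conditioned input distribution p(x^n || y^{n-1}))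
  is given by q xs ys = P(X_i = 1 | x^{i-1} = xs, y^{i-1} = ys).\<close>

definition fb_policy :: "(bool list \<Rightarrow> bool list \<Rightarrow> real) \<Rightarrow> bool" where
  "fb_policy q \<longleftrightarrow> (\<forall>xs ys. 0 \<le> q xs ys \<and> q xs ys \<le> 1)"

definition enc_prob :: "(bool list \<Rightarrow> bool list \<Rightarrow> real) \<Rightarrow> bool list \<Rightarrow> bool list \<Rightarrow> real" where
  "enc_prob q xs ys = (\<Prod>i<length xs.
      if xs ! i then q (take i xs) (take i ys) else 1 - q (take i xs) (take i ys))"

definition out_fb :: "real \<Rightarrow> real \<Rightarrow> nat \<Rightarrow> (bool list \<Rightarrow> bool list \<Rightarrow> real) \<Rightarrow> bool list \<Rightarrow> real" where
  "out_fb a b n q ys = (\<Sum>xs\<in>blists n. enc_prob q xs ys * chan_prob a b xs ys)"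

definition directed_info_fb :: "real \<Rightarrow> real \<Rightarrow> nat \<Rightarrow> (bool list \<Rightarrow> bool list \<Rightarrow> real) \<Rightarrow> real" where
  "directed_info_fb a b n q =
     (\<Sum>xs\<in>blists n. \<Sum>ys\<in>blists n.
        info_term (enc_prob q xs ys * chan_prob a b xs ys) (enc_prob q xs ys * out_fb a b n q ys))"

definition post_Cfb_n :: "real \<Rightarrow> real \<Rightarrow> nat \<Rightarrow> real" where
  "post_Cfb_n a b n = Sup {directed_info_fb a b n q / real n | q. fb_policy q}"

definition post_capacity_fb :: "real \<Rightarrow> real \<Rightarrow> real" where
  "post_capacity_fb a b = lim (post_Cfb_n a b)"

definition post_gamma :: "real \<Rightarrow> real \<Rightarrow> real" where
  "post_gamma a b = 2 powr ((bin_ent b - bin_ent a) / (a + b - 1))"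

text \<open>Discriminants D1 = g^2 (abar+b)^2 - 4 a bbar, D2 = (a+bbar)^2 - 4 abar b g^2.
  A set whose defining expressions involve sqrt of a negative number or
  division by zero is read as imposing that these are well defined (real, finite).\<close>

definition D1 :: "real \<Rightarrow> real \<Rightarrow> real" where
  "D1 a b = (post_gamma a b)^2 * ((1 - a) + b)^2 - 4 * a * (1 - b)"

definition D2 :: "real \<Rightarrow> real \<Rightarrow> real" where
  "D2 a b = (a + (1 - b))^2 - 4 * (1 - a) * b * (post_gamma a b)^2"

definition L1 :: "real \<Rightarrow> real \<Rightarrow> real set" where
  "L1 a b = (let g = post_gamma a b; ab = 1 - a; bb = 1 - b in
     {\<beta>. D1 a b \<ge> 0 \<and> bb \<noteq> 0 \<and>
        max (ab / bb * g) ((g * (ab + b) - sqrt (D1 a b)) / (2 * bb)) \<le> \<beta> \<and>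
        \<beta> \<le> (g * (ab + b) + sqrt (D1 a b)) / (2 * bb)})"

definition L2 :: "real \<Rightarrow> real \<Rightarrow> real set" where
  "L2 a b = (let g = post_gamma a b; ab = 1 - a; bb = 1 - b in
     {\<beta>. D2 a b \<ge> 0 \<and> bb \<noteq> 0 \<and> b * g \<noteq> 0 \<and>
        ((a + bb) + sqrt (D2 a b)) / (2 * b * g) \<le> \<beta> \<and> \<beta> \<le> ab / bb * g})"

definition L3 :: "real \<Rightarrow> real \<Rightarrow> real set" where
  "L3 a b = (let g = post_gamma a b; ab = 1 - a; bb = 1 - b in
     {\<beta>. D2 a b \<ge> 0 \<and> bb \<noteq> 0 \<and> b * g \<noteq> 0 \<and>
        \<beta> \<le> min (ab / bb * g) (((a + bb) - sqrt (D2 a b)) / (2 * b * g))})"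

definition L4 :: "real \<Rightarrow> real \<Rightarrow> real set" where
  "L4 a b = (let g = post_gamma a b; ab = 1 - a; bb = 1 - b in
     {\<beta>. D1 a b \<ge> 0 \<and> a \<noteq> 0 \<and>
        \<beta> \<le> min (b * g / a) ((g * (ab + b) - sqrt (D1 a b)) / (2 * a))})"

definition L5 :: "real \<Rightarrow> real \<Rightarrow> real set" where
  "L5 a b = (let g = post_gamma a b; ab = 1 - a; bb = 1 - b in
     {\<beta>. D1 a b \<ge> 0 \<and> a \<noteq> 0 \<and>
        (g * (ab + b) + sqrt (D1 a b)) / (2 * a) \<le> \<beta> \<and> \<beta> \<le> b * g / a})"

definition L6 :: "real \<Rightarrow> real \<Rightarrow> real set" where
  "L6 a b = (let g = post_gamma a b; ab = 1 - a; bb = 1 - b in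
     {\<beta>. D2 a b \<ge> 0 \<and> a \<noteq> 0 \<and> ab * g \<noteq> 0 \<and>
        max (b * g / a) (((a + bb) - sqrt (D2 a b)) / (2 * ab * g)) \<le> \<beta> \<and>
        \<beta> \<le> ((a + bb) + sqrt (D2 a b)) / (2 * ab * g)})"

definition L0 :: "real \<Rightarrow> real \<Rightarrow> real set" where
  "L0 a b = (let g = post_gamma a b; ab = 1 - a; bb = 1 - b in
     {\<beta>. ab * g \<noteq> 0 \<and> bb \<noteq> 0 \<and> 1 \<le> \<beta> \<and> \<beta> \<le> min (a / (ab * g)) (b * g / bb)})"

end

theory Submission
  imports Defs
begin

lemma finite_blists[simp]: "finite (blists n)"
proof -
  have "blists n = {xs. set xs \<subseteq> UNIV \<and> length xs = n}" unfolding blists_def by auto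
  thus ?thesis using finite_lists_length_eq[of "UNIV::bool set" n] by simp
qed

lemma blists_0[simp]: "blists 0 = {[]}" unfolding blists_def by auto

lemma blists_Suc: "blists (Suc n) = (\<lambda>zs. zs @ [False]) ` blists n \<union> (\<lambda>zs. zs @ [True]) ` blists n"
proof (rule set_eqI, rule iffI)
  fix zs assume "zs \<in> blists (Suc n)"
  hence l: "length zs = Suc n" unfolding blists_def by auto
  then obtain ys y where zs: "zs = ys @ [y]" by (metis length_Suc_conv_rev)
  with l have "ys \<in> blists n" unfolding blists_def by auto
  thus "zs \<in> (\<lambda>zs. zs @ [False]) ` blists n \<union> (\<lambda>zs. zs @ [True]) ` blists n"
    using zs by (cases y) auto
qed (auto simp: blists_def)

lemma sum_blists_Suc:
  "(\<Sum>zs\<in>blists (Suc n). f zs) = (\<Sum>zs\<in>blists n. f (zs @ [False]) + f (zs @ [True]))"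
proof -
  have d: "(\<lambda>zs. zs @ [False]) ` blists n \<inter> (\<lambda>zs. zs @ [True]) ` blists n = {}" by auto
  have i1: "inj_on (\<lambda>zs. zs @ [False]) (blists n)" by (auto simp: inj_on_def)
  have i2: "inj_on (\<lambda>zs. zs @ [True]) (blists n)" by (auto simp: inj_on_def)
  show ?thesis unfolding blists_Suc
    by (subst sum.union_disjoint) (use d i1 i2 in \<open>auto simp: sum.reindex sum.distrib\<close>)
qed

lemma blists_len: "zs \<in> blists n \<Longrightarrow> length zs = n" by (simp add: blists_def)

definition pv :: "bool list \<Rightarrow> bool" where "pv ys = prev_out ys (length ys)"

lemma pv_snoc[simp]: "pv (ys @ [y]) = y" by (simp add: pv_def prev_out_def nth_append)
lemma pv_Nil[simp]: "pv [] = False" by (simp add: pv_def prev_out_def)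

lemma chan_snoc:
  assumes "length xs = length ys"
  shows "chan_prob a b (xs @ [x]) (ys @ [y]) = chan_prob a b xs ys * post_W a b (pv ys) x y"
proof -
  have "chan_prob a b (xs @ [x]) (ys @ [y]) =
     (\<Prod>i<length xs. post_W a b (prev_out (ys@[y]) i) ((xs@[x]) ! i) ((ys@[y]) ! i)) *
       post_W a b (prev_out (ys@[y]) (length xs)) x y"
    unfolding chan_prob_def using assms by (simp add: nth_append)
  also have "(\<Prod>i<length xs. post_W a b (prev_out (ys@[y]) i) ((xs@[x]) ! i) ((ys@[y]) ! i))
      = chan_prob a b xs ys"
    unfolding chan_prob_def using assms
    by (intro prod.cong) (auto simp: nth_append prev_out_def)
  also have "prev_out (ys@[y]) (length xs) = pv ys"
    using assms by (simp add: pv_def prev_out_def nth_append)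
  finally show ?thesis .
qed

lemma chan_Nil[simp]: "chan_prob a b [] ys = 1" by (simp add: chan_prob_def)

lemma enc_snoc:
  assumes "length xs = length ys"
  shows "enc_prob q (xs @ [x]) (ys @ [y]) = enc_prob q xs ys * (if x then q xs ys else 1 - q xs ys)"
proof -
  define F where "F = (\<lambda>i. if (xs@[x]) ! i then q (take i (xs@[x])) (take i (ys@[y]))
          else 1 - q (take i (xs@[x])) (take i (ys@[y])))"
  have "enc_prob q (xs @ [x]) (ys @ [y]) = (\<Prod>i<Suc (length xs). F i)"
    unfolding enc_prob_def F_def by simp
  also have "\<dots> = (\<Prod>i<length xs. F i) * F (length xs)" by (rule prod.lessThan_Suc)
  also have "take (length xs) (ys@[y]) = ys" using assms by simp
  hence "F (length xs) = (if x then q xs ys else 1 - q xs ys)"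
    unfolding F_def by (simp only: nth_append_length take_append) simp
  also have "(\<Prod>i<length xs. F i) = enc_prob q xs ys"
    unfolding enc_prob_def F_def using assms by (intro prod.cong) (auto simp: nth_append)
  finally show ?thesis .
qed

lemma enc_Nil[simp]: "enc_prob q [] ys = 1" by (simp add: enc_prob_def)

definition Qs :: "real \<Rightarrow> bool \<Rightarrow> bool \<Rightarrow> real" where
  "Qs g s y = (if y = s then g / (1 + g) else 1 / (1 + g))"

definition Qn :: "real \<Rightarrow> bool list \<Rightarrow> real" where
  "Qn g ys = (\<Prod>i<length ys. Qs g (prev_out ys i) (ys ! i))"

lemma Qn_snoc: "Qn g (ys @ [y]) = Qn g ys * Qs g (pv ys) y"
proof -
  have "Qn g (ys @ [y]) = (\<Prod>i<length ys. Qs g (prev_out (ys@[y]) i) ((ys@[y]) ! i)) * Qs g (prev_out (ys@[y]) (length ys)) y"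
    unfolding Qn_def by simp
  also have "(\<Prod>i<length ys. Qs g (prev_out (ys@[y]) i) ((ys@[y]) ! i)) = Qn g ys"
    unfolding Qn_def by (intro prod.cong) (auto simp: nth_append prev_out_def)
  also have "prev_out (ys@[y]) (length ys) = pv ys" by (simp add: pv_def prev_out_def nth_append)
  finally show ?thesis .
qed

lemma Qn_Nil[simp]: "Qn g [] = 1" by (simp add: Qn_def)



locale pc =
  fixes a b g :: real
  assumes a0: "0 < a" and a1: "a < 1" and b0: "0 < b" and b1: "b < 1" and ab: "a + b > 1"
    and g0: "g > 0"
begin

lemma W_pos: "post_W a b s x y > 0"
  using a0 a1 b0 b1 unfolding post_W_def Let_def by auto

lemma W_sum: "post_W a b s x False + post_W a b s x True = 1"
  unfolding post_W_def Let_def by auto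

lemma Qs_pos: "Qs g s y > 0" using g0 unfolding Qs_def by auto
lemma Qs_sum: "Qs g s False + Qs g s True = 1" using g0 unfolding Qs_def by (auto simp: field_simps)

lemma chan_pos: "chan_prob a b xs ys > 0"
  unfolding chan_prob_def by (rule prod_pos) (use W_pos in auto)

lemma Qn_pos: "Qn g ys > 0"
  unfolding Qn_def by (rule prod_pos) (use Qs_pos in auto)

lemma chan_sum1: "length xs = n \<Longrightarrow> (\<Sum>ys\<in>blists n. chan_prob a b xs ys) = 1"
proof (induction n arbitrary: xs)
  case 0 thus ?case by simp
next
  case (Suc n)
  then obtain xs' x where xs: "xs = xs' @ [x]" and l: "length xs' = n"
    by (metis length_Suc_conv_rev)
  have "(\<Sum>ys\<in>blists (Suc n). chan_prob a b xs ys)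
     = (\<Sum>ys\<in>blists n. chan_prob a b xs' ys * (post_W a b (pv ys) x False + post_W a b (pv ys) x True))"
    unfolding sum_blists_Suc xs
    by (intro sum.cong refl) (simp add: chan_snoc l blists_len algebra_simps)
  also have "\<dots> = (\<Sum>ys\<in>blists n. chan_prob a b xs' ys)" by (simp add: W_sum)
  finally show ?case using Suc.IH[OF l] by simp
qed

lemma Qn_sum1: "(\<Sum>ys\<in>blists n. Qn g ys) = 1"
proof (induction n)
  case 0 thus ?case by simp
next
  case (Suc n)
  have "(\<Sum>ys\<in>blists (Suc n). Qn g ys) = (\<Sum>ys\<in>blists n. Qn g ys * (Qs g (pv ys) False + Qs g (pv ys) True))"
    unfolding sum_blists_Suc by (intro sum.cong refl) (simp add: Qn_snoc algebra_simps)
  thus ?case using Suc.IH by (simp add: Qs_sum)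
qed

definition Dv :: "bool \<Rightarrow> bool \<Rightarrow> real" where
  "Dv s x = post_W a b s x False * log 2 (post_W a b s x False / Qs g s False)
          + post_W a b s x True * log 2 (post_W a b s x True / Qs g s True)"

lemma log_split: "log 2 ((c * w) / (q * r)) = log 2 (c / q) + log 2 (w / r)"
  if "c > 0" "w > 0" "q > 0" "r > 0" for c w q r :: real
proof -
  have "(c * w) / (q * r) = (c / q) * (w / r)" by simp
  hence "log 2 ((c * w) / (q * r)) = log 2 ((c / q) * (w / r))" by (simp only:)
  also have "\<dots> = log 2 (c / q) + log 2 (w / r)" using that by (simp only: log_mult) simp
  finally show ?thesis .
qed

lemma K2:
  assumes D: "\<And>s x. Dv s x = C"
  shows "length xs = n \<Longrightarrow>
    (\<Sum>ys\<in>blists n. chan_prob a b xs ys * log 2 (chan_prob a b xs ys / Qn g ys)) = n * C"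
proof (induction n arbitrary: xs)
  case 0 thus ?case by simp
next
  case (Suc n)
  then obtain xs' x where xs: "xs = xs' @ [x]" and l: "length xs' = n"
    by (metis length_Suc_conv_rev)
  have "(\<Sum>ys\<in>blists (Suc n). chan_prob a b xs ys * log 2 (chan_prob a b xs ys / Qn g ys))
     = (\<Sum>ys\<in>blists n. chan_prob a b xs' ys * log 2 (chan_prob a b xs' ys / Qn g ys) *
            (post_W a b (pv ys) x False + post_W a b (pv ys) x True)
          + chan_prob a b xs' ys * Dv (pv ys) x)"
    unfolding sum_blists_Suc xs
  proof (intro sum.cong refl)
    fix ys assume "ys \<in> blists n"
    hence ly: "length xs' = length ys" using l by (simp add: blists_len)
    show "chan_prob a b (xs' @ [x]) (ys @ [False]) * log 2 (chan_prob a b (xs' @ [x]) (ys @ [False]) / Qn g (ys @ [False])) +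
        chan_prob a b (xs' @ [x]) (ys @ [True]) * log 2 (chan_prob a b (xs' @ [x]) (ys @ [True]) / Qn g (ys @ [True])) =
        chan_prob a b xs' ys * log 2 (chan_prob a b xs' ys / Qn g ys) * (post_W a b (pv ys) x False + post_W a b (pv ys) x True) +
        chan_prob a b xs' ys * Dv (pv ys) x"
      unfolding chan_snoc[OF ly] Qn_snoc Dv_def
      by (simp add: log_split chan_pos Qn_pos W_pos Qs_pos algebra_simps)
  qed
  also have "\<dots> = (\<Sum>ys\<in>blists n. chan_prob a b xs' ys * log 2 (chan_prob a b xs' ys / Qn g ys))
       + C * (\<Sum>ys\<in>blists n. chan_prob a b xs' ys)"
    by (simp add: W_sum D sum.distrib sum_distrib_left algebra_simps)
  also have "\<dots> = n * C + C" using Suc.IH[OF l] chan_sum1[OF l] by simp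
  finally show ?case by (simp add: algebra_simps)
qed

end


lemma sum2_blists_Suc:
  "(\<Sum>xs\<in>blists (Suc n). \<Sum>ys\<in>blists (Suc n). f xs ys) =
   (\<Sum>xs\<in>blists n. \<Sum>ys\<in>blists n. f (xs@[False]) (ys@[False]) + f (xs@[False]) (ys@[True])
        + f (xs@[True]) (ys@[False]) + f (xs@[True]) (ys@[True]))"
  unfolding sum_blists_Suc by (simp add: sum.distrib algebra_simps)

context pc begin

lemma enc_nonneg: "fb_policy q \<Longrightarrow> enc_prob q xs ys \<ge> 0"
  unfolding enc_prob_def fb_policy_def by (rule prod_nonneg) auto

lemma fb_sum1: "(\<Sum>xs\<in>blists n. \<Sum>ys\<in>blists n. enc_prob q xs ys * chan_prob a b xs ys) = 1"
proof (induction n)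
  case 0 thus ?case by simp
next
  case (Suc n)
  have "(\<Sum>xs\<in>blists (Suc n). \<Sum>ys\<in>blists (Suc n). enc_prob q xs ys * chan_prob a b xs ys)
      = (\<Sum>xs\<in>blists n. \<Sum>ys\<in>blists n. enc_prob q xs ys * chan_prob a b xs ys)"
    unfolding sum2_blists_Suc
  proof (intro sum.cong refl)
    fix xs ys assume "xs \<in> blists n" "ys \<in> blists n"
    hence l: "length xs = length ys" by (simp add: blists_len)
    have e: "\<And>x y. enc_prob q (xs@[x]) (ys@[y]) * chan_prob a b (xs@[x]) (ys@[y]) =
       enc_prob q xs ys * chan_prob a b xs ys * ((if x then q xs ys else 1 - q xs ys) * post_W a b (pv ys) x y)"
      by (simp add: enc_snoc[OF l] chan_snoc[OF l])
    show "enc_prob q (xs @ [False]) (ys @ [False]) * chan_prob a b (xs @ [False]) (ys @ [False]) +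
          enc_prob q (xs @ [False]) (ys @ [True]) * chan_prob a b (xs @ [False]) (ys @ [True]) +
          enc_prob q (xs @ [True]) (ys @ [False]) * chan_prob a b (xs @ [True]) (ys @ [False]) +
          enc_prob q (xs @ [True]) (ys @ [True]) * chan_prob a b (xs @ [True]) (ys @ [True]) =
          enc_prob q xs ys * chan_prob a b xs ys"
      unfolding e using W_sum[of "pv ys" False] W_sum[of "pv ys" True]
      by (simp add: algebra_simps) (simp add: distrib_left[symmetric] mult.assoc[symmetric])
  qed
  thus ?case using Suc.IH by simp
qed

lemma fb_sumlog:
  assumes D: "\<And>s x. Dv s x = C"
  shows "(\<Sum>xs\<in>blists n. \<Sum>ys\<in>blists n. enc_prob q xs ys * chan_prob a b xs ys *
            log 2 (chan_prob a b xs ys / Qn g ys)) = n * C"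
proof (induction n)
  case 0 thus ?case by simp
next
  case (Suc n)
  let ?E = "\<lambda>xs ys. enc_prob q xs ys * chan_prob a b xs ys"
  let ?L = "\<lambda>xs ys. log 2 (chan_prob a b xs ys / Qn g ys)"
  have "(\<Sum>xs\<in>blists (Suc n). \<Sum>ys\<in>blists (Suc n). ?E xs ys * ?L xs ys)
      = (\<Sum>xs\<in>blists n. \<Sum>ys\<in>blists n. ?E xs ys * ?L xs ys + C * ?E xs ys)"
    unfolding sum2_blists_Suc
  proof (intro sum.cong refl)
    fix xs ys assume "xs \<in> blists n" "ys \<in> blists n"
    hence l: "length xs = length ys" by (simp add: blists_len)
    define e where "e = q xs ys"
    define s where "s = pv ys"
    have e: "\<And>x y. ?E (xs@[x]) (ys@[y]) * ?L (xs@[x]) (ys@[y]) =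
       ?E xs ys * ((if x then e else 1 - e) * post_W a b s x y) * (?L xs ys + log 2 (post_W a b s x y / Qs g s y))"
      by (simp add: enc_snoc[OF l] chan_snoc[OF l] Qn_snoc log_split chan_pos Qn_pos W_pos Qs_pos e_def s_def)
    have "?E xs ys * ?L xs ys + C * ?E xs ys =
       ?E xs ys * ?L xs ys * ((1-e) * (post_W a b s False False + post_W a b s False True) + e * (post_W a b s True False + post_W a b s True True))
       + ?E xs ys * ((1 - e) * Dv s False + e * Dv s True)"
      by (simp add: W_sum D algebra_simps)
    also have "\<dots> = ?E (xs@[False]) (ys@[False]) * ?L (xs@[False]) (ys@[False]) +
          ?E (xs@[False]) (ys@[True]) * ?L (xs@[False]) (ys@[True]) +
          ?E (xs@[True]) (ys@[False]) * ?L (xs@[True]) (ys@[False]) +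
          ?E (xs@[True]) (ys@[True]) * ?L (xs@[True]) (ys@[True])"
      unfolding e Dv_def by (simp add: algebra_simps)
    finally show "?E (xs@[False]) (ys@[False]) * ?L (xs@[False]) (ys@[False]) +
          ?E (xs@[False]) (ys@[True]) * ?L (xs@[False]) (ys@[True]) +
          ?E (xs@[True]) (ys@[False]) * ?L (xs@[True]) (ys@[False]) +
          ?E (xs@[True]) (ys@[True]) * ?L (xs@[True]) (ys@[True]) = ?E xs ys * ?L xs ys + C * ?E xs ys" by simp
  qed
  also have "\<dots> = n * C + C * 1"
  proof -
    have "(\<Sum>xs\<in>blists n. \<Sum>ys\<in>blists n. C * ?E xs ys) = C * (\<Sum>xs\<in>blists n. \<Sum>ys\<in>blists n. ?E xs ys)"
      by (simp add: sum_distrib_left)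
    thus ?thesis using Suc.IH fb_sum1[where n=n and q=q] by (simp add: sum.distrib)
  qed
  finally show ?case by (simp add: algebra_simps)
qed

end


lemma log2_le: "z > 0 \<Longrightarrow> log 2 z \<le> (z - 1) / ln 2"
  unfolding log_def using ln_le_minus_one[of z] by (simp add: divide_right_mono)

lemma info_bound:
  fixes E ch Q out :: real
  assumes "E \<ge> 0" "ch > 0" "Q > 0" "out \<ge> E * ch"
  shows "info_term (E * ch) (E * out) \<le> E * ch * log 2 (ch / Q) + E * ch * (Q / out - 1) / ln 2"
proof (cases "E = 0")
  case True thus ?thesis by (simp add: info_term_def)
next
  case False
  hence E: "E > 0" using assms by simp
  hence o: "out > 0" using assms by (smt (verit) mult_pos_pos)
  have "info_term (E * ch) (E * out) = E * ch * log 2 (ch / out)"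
    using E assms by (simp add: info_term_def)
  also have "ch / out = (ch / Q) * (Q / out)" using assms by simp
  hence "log 2 (ch / out) = log 2 (ch / Q) + log 2 (Q / out)"
    using assms o by (simp only: log_mult) simp
  also have "E * ch * (log 2 (ch / Q) + log 2 (Q / out)) \<le> E * ch * (log 2 (ch / Q) + (Q / out - 1) / ln 2)"
    using log2_le[of "Q / out"] assms o E by (intro mult_left_mono add_left_mono) auto
  finally show ?thesis by (simp add: algebra_simps)
qed

context pc begin

lemma gen_ub:
  fixes E :: "bool list \<Rightarrow> bool list \<Rightarrow> real" and out :: "bool list \<Rightarrow> real" and C :: real
  assumes E0: "\<And>xs ys. E xs ys \<ge> 0"
    and S: "(\<Sum>xs\<in>blists n. \<Sum>ys\<in>blists n. E xs ys * chan_prob a b xs ys *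
            log 2 (chan_prob a b xs ys / Qn g ys)) = n * C"
    and O: "\<And>ys. out ys = (\<Sum>xs\<in>blists n. E xs ys * chan_prob a b xs ys)"
    and O1: "(\<Sum>ys\<in>blists n. out ys) = 1"
  shows "(\<Sum>xs\<in>blists n. \<Sum>ys\<in>blists n. info_term (E xs ys * chan_prob a b xs ys) (E xs ys * out ys)) \<le> n * C"
proof -
  let ?c = "chan_prob a b"
  have oge: "out ys \<ge> E xs ys * ?c xs ys" if "xs \<in> blists n" for xs ys
  proof -
    have "E xs ys * ?c xs ys \<le> (\<Sum>xs\<in>blists n. E xs ys * ?c xs ys)"
      by (rule member_le_sum) (auto intro!: mult_nonneg_nonneg E0 less_imp_le[OF chan_pos] that)
    thus ?thesis using O by simp
  qed
  have "(\<Sum>xs\<in>blists n. \<Sum>ys\<in>blists n. info_term (E xs ys * ?c xs ys) (E xs ys * out ys))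
     \<le> (\<Sum>xs\<in>blists n. \<Sum>ys\<in>blists n. E xs ys * ?c xs ys * log 2 (?c xs ys / Qn g ys)
            + E xs ys * ?c xs ys * (Qn g ys / out ys - 1) / ln 2)"
    by (intro sum_mono info_bound) (use E0 chan_pos Qn_pos oge in auto)
  also have "\<dots> = n * C + (\<Sum>xs\<in>blists n. \<Sum>ys\<in>blists n. E xs ys * ?c xs ys * (Qn g ys / out ys - 1)) / ln 2"
    using S by (simp only: sum.distrib sum_divide_distrib)
  also have "(\<Sum>xs\<in>blists n. \<Sum>ys\<in>blists n. E xs ys * ?c xs ys * (Qn g ys / out ys - 1))
      = (\<Sum>ys\<in>blists n. \<Sum>xs\<in>blists n. E xs ys * ?c xs ys * (Qn g ys / out ys - 1))"
    by (rule sum.swap)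
  also have "\<dots> = (\<Sum>ys\<in>blists n. (\<Sum>xs\<in>blists n. E xs ys * ?c xs ys) * (Qn g ys / out ys - 1))"
    by (simp only: sum_distrib_right)
  also have "(\<Sum>ys\<in>blists n. (\<Sum>xs\<in>blists n. E xs ys * ?c xs ys) * (Qn g ys / out ys - 1))
       \<le> (\<Sum>ys\<in>blists n. Qn g ys - out ys)"
  proof (intro sum_mono)
    fix ys
    have "out ys * (Qn g ys / out ys - 1) \<le> Qn g ys - out ys"
      using Qn_pos[of ys] by (cases "out ys = 0") (auto simp: algebra_simps)
    thus "(\<Sum>xs\<in>blists n. E xs ys * ?c xs ys) * (Qn g ys / out ys - 1) \<le> Qn g ys - out ys"
      using O by simp
  qed
  also have "(\<Sum>ys\<in>blists n. Qn g ys - out ys) = 0" using O1 Qn_sum1 by (simp add: sum_subtractf)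
  finally show ?thesis by (simp add: divide_right_mono)
qed

lemma fb_ub:
  assumes D: "\<And>s x. Dv s x = C" and q: "fb_policy q"
  shows "directed_info_fb a b n q \<le> n * C"
  unfolding directed_info_fb_def
proof (rule gen_ub[where E="enc_prob q" and out="out_fb a b n q" and n=n and C=C])
  show "\<And>xs ys. 0 \<le> enc_prob q xs ys" using enc_nonneg q by auto
  show "(\<Sum>xs\<in>blists n. \<Sum>ys\<in>blists n. enc_prob q xs ys * chan_prob a b xs ys *
            log 2 (chan_prob a b xs ys / Qn g ys)) = n * C" by (rule fb_sumlog[OF D])
  show "\<And>ys. out_fb a b n q ys = (\<Sum>xs\<in>blists n. enc_prob q xs ys * chan_prob a b xs ys)"
    by (simp add: out_fb_def)
  show "(\<Sum>ys\<in>blists n. out_fb a b n q ys) = 1"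
    unfolding out_fb_def using fb_sum1[where n=n and q=q] by (subst sum.swap) simp
qed

lemma nf_sumlog:
  assumes D: "\<And>s x. Dv s x = C" and p: "input_dist n p"
  shows "(\<Sum>xs\<in>blists n. \<Sum>ys\<in>blists n. p xs * chan_prob a b xs ys *
            log 2 (chan_prob a b xs ys / Qn g ys)) = n * C"
proof -
  have "(\<Sum>xs\<in>blists n. \<Sum>ys\<in>blists n. p xs * chan_prob a b xs ys * log 2 (chan_prob a b xs ys / Qn g ys))
      = (\<Sum>xs\<in>blists n. p xs * (\<Sum>ys\<in>blists n. chan_prob a b xs ys * log 2 (chan_prob a b xs ys / Qn g ys)))"
    by (simp add: sum_distrib_left mult.assoc)
  also have "\<dots> = (\<Sum>xs\<in>blists n. p xs * (n * C))"
    by (intro sum.cong refl) (simp add: K2[OF D] blists_len)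
  also have "\<dots> = n * C" using p unfolding input_dist_def by (simp add: sum_distrib_right[symmetric])
  finally show ?thesis .
qed

lemma nf_out1:
  assumes p: "input_dist n p"
  shows "(\<Sum>ys\<in>blists n. out_nf a b n p ys) = 1"
proof -
  have "(\<Sum>ys\<in>blists n. out_nf a b n p ys) = (\<Sum>xs\<in>blists n. p xs * (\<Sum>ys\<in>blists n. chan_prob a b xs ys))"
    unfolding out_nf_def by (subst sum.swap) (simp add: sum_distrib_left mult.assoc)
  also have "\<dots> = (\<Sum>xs\<in>blists n. p xs)" by (intro sum.cong refl) (simp add: chan_sum1 blists_len)
  finally show ?thesis using p unfolding input_dist_def by simp
qed

lemma nf_ub:
  assumes D: "\<And>s x. Dv s x = C" and p: "input_dist n p"
  shows "mutual_info_nf a b n p \<le> n * C"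
proof -
  define p' where "p' = (\<lambda>xs. if xs \<in> blists n then p xs else 0)"
  have pp: "\<And>xs. xs \<in> blists n \<Longrightarrow> p' xs = p xs" by (simp add: p'_def)
  have "mutual_info_nf a b n p = (\<Sum>xs\<in>blists n. \<Sum>ys\<in>blists n.
        info_term ((\<lambda>xs ys. p' xs) xs ys * chan_prob a b xs ys) ((\<lambda>xs ys. p' xs) xs ys * out_nf a b n p ys))"
    unfolding mutual_info_nf_def by (intro sum.cong refl) (simp add: pp)
  also have "\<dots> \<le> n * C"
  proof (rule gen_ub[where E="\<lambda>xs ys. p' xs" and out="out_nf a b n p" and n=n and C=C])
    show "\<And>xs ys. 0 \<le> p' xs" using p unfolding input_dist_def p'_def by auto
    show "(\<Sum>xs\<in>blists n. \<Sum>ys\<in>blists n. p' xs * chan_prob a b xs ys * log 2 (chan_prob a b xs ys / Qn g ys)) = n * C"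
      using nf_sumlog[OF D p] by (simp add: pp)
    show "\<And>ys. out_nf a b n p ys = (\<Sum>xs\<in>blists n. p' xs * chan_prob a b xs ys)"
      unfolding out_nf_def by (intro sum.cong refl) (simp add: pp)
    show "(\<Sum>ys\<in>blists n. out_nf a b n p ys) = 1" by (rule nf_out1[OF p])
  qed
  finally show ?thesis .
qed

end


definition qstar :: "real \<Rightarrow> bool list \<Rightarrow> bool list \<Rightarrow> real" where
  "qstar pp xs ys = (if pv ys then 1 - pp else pp)"

definition vm :: "(bool \<Rightarrow> real) \<Rightarrow> (bool \<Rightarrow> bool \<Rightarrow> real) \<Rightarrow> bool \<Rightarrow> real" where
  "vm v N = (\<lambda>j. v False * N False j + v True * N True j)"

definition fw :: "(bool \<Rightarrow> real) \<Rightarrow> (bool \<Rightarrow> bool \<Rightarrow> bool \<Rightarrow> real) \<Rightarrow> bool list \<Rightarrow> bool \<Rightarrow> real" where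
  "fw u M xs = foldl (\<lambda>v x. vm v (M x)) u xs"

lemma fw_snoc: "fw u M (xs @ [x]) = vm (fw u M xs) (M x)" by (simp add: fw_def)
lemma fw_Nil[simp]: "fw u M [] = u" by (simp add: fw_def)

lemma fw_nonneg:
  assumes "\<And>j. u j \<ge> 0" "\<And>x i j. M x i j \<ge> 0"
  shows "fw u M xs j \<ge> 0"
  using assms(1)
proof (induction xs arbitrary: u j rule: rev_induct)
  case Nil thus ?case by simp
next
  case (snoc x xs)
  have "\<And>j. fw u M xs j \<ge> 0" using snoc by blast
  thus ?case using assms(2) by (simp add: fw_snoc vm_def)
qed

context pc begin

lemma qstar_out:
  assumes pp: "\<And>s y. (1 - (if s then 1 - pp else pp)) * post_W a b s False y
                    + (if s then 1 - pp else pp) * post_W a b s True y = Qs g s y"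
  shows "length ys = n \<Longrightarrow> out_fb a b n (qstar pp) ys = Qn g ys"
proof (induction n arbitrary: ys)
  case 0 thus ?case by (simp add: out_fb_def)
next
  case (Suc n)
  then obtain ys' y where ys: "ys = ys' @ [y]" and l: "length ys' = n"
    by (metis length_Suc_conv_rev)
  have "out_fb a b (Suc n) (qstar pp) ys =
     (\<Sum>xs\<in>blists n. enc_prob (qstar pp) xs ys' * chan_prob a b xs ys' * Qs g (pv ys') y)"
    unfolding out_fb_def sum_blists_Suc ys
  proof (intro sum.cong refl)
    fix xs assume "xs \<in> blists n"
    hence lx: "length xs = length ys'" using l by (simp add: blists_len)
    show "enc_prob (qstar pp) (xs @ [False]) (ys' @ [y]) * chan_prob a b (xs @ [False]) (ys' @ [y]) +
        enc_prob (qstar pp) (xs @ [True]) (ys' @ [y]) * chan_prob a b (xs @ [True]) (ys' @ [y]) =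
        enc_prob (qstar pp) xs ys' * chan_prob a b xs ys' * Qs g (pv ys') y"
      unfolding enc_snoc[OF lx] chan_snoc[OF lx] pp[of "pv ys'" y, symmetric]
      by (simp add: qstar_def algebra_simps)
  qed
  also have "\<dots> = out_fb a b n (qstar pp) ys' * Qs g (pv ys') y"
    unfolding out_fb_def by (simp add: sum_distrib_right)
  finally show ?case using Suc.IH[OF l] by (simp add: ys Qn_snoc)
qed

lemma exact_info:
  fixes E :: "bool list \<Rightarrow> bool list \<Rightarrow> real"
  assumes "E xs ys \<ge> 0"
  shows "info_term (E xs ys * chan_prob a b xs ys) (E xs ys * Qn g ys)
       = E xs ys * chan_prob a b xs ys * log 2 (chan_prob a b xs ys / Qn g ys)"
proof (cases "E xs ys = 0")
  case True thus ?thesis by (simp add: info_term_def)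
next
  case False thus ?thesis using chan_pos[of xs ys] Qn_pos[of ys] by (simp add: info_term_def)
qed

lemma qstar_info:
  assumes D: "\<And>s x. Dv s x = C" and pi01: "0 \<le> pp" "pp \<le> 1"
    and pp: "\<And>s y. (1 - (if s then 1 - pp else pp)) * post_W a b s False y
                    + (if s then 1 - pp else pp) * post_W a b s True y = Qs g s y"
  shows "fb_policy (qstar pp)" "directed_info_fb a b n (qstar pp) = n * C"
proof -
  show fb: "fb_policy (qstar pp)" using pi01 by (simp add: fb_policy_def qstar_def)
  have "directed_info_fb a b n (qstar pp) = (\<Sum>xs\<in>blists n. \<Sum>ys\<in>blists n.
       enc_prob (qstar pp) xs ys * chan_prob a b xs ys * log 2 (chan_prob a b xs ys / Qn g ys))"
    unfolding directed_info_fb_def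
    by (intro sum.cong refl) (simp add: qstar_out[OF pp] blists_len exact_info enc_nonneg[OF fb])
  also have "\<dots> = n * C" by (rule fb_sumlog[OF D])
  finally show "directed_info_fb a b n (qstar pp) = n * C" .
qed

lemma hmm_sum:
  assumes row: "\<And>i. M False i False + M False i True + M True i False + M True i True = 1"
  shows "(\<Sum>xs\<in>blists n. fw v M xs False + fw v M xs True) = v False + v True"
proof (induction n)
  case 0 thus ?case by simp
next
  case (Suc n)
  have "(\<Sum>xs\<in>blists (Suc n). fw v M xs False + fw v M xs True)
     = (\<Sum>xs\<in>blists n. fw v M xs False * (M False False False + M False False True + M True False False + M True False True)
          + fw v M xs True * (M False True False + M False True True + M True True False + M True True True))"
    unfolding sum_blists_Suc by (intro sum.cong refl) (simp add: fw_snoc vm_def algebra_simps)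
  also have "\<dots> = (\<Sum>xs\<in>blists n. fw v M xs False + fw v M xs True)" by (simp add: row)
  finally show ?case using Suc.IH by simp
qed

lemma hmm_out:
  assumes it: "\<And>s y j. post_W a b s False y * vm (w s) (M False) j + post_W a b s True y * vm (w s) (M True) j
      = Qs g s y * w y j"
  shows "length ys = n \<Longrightarrow> (\<Sum>xs\<in>blists n. fw (w False) M xs j * chan_prob a b xs ys) = Qn g ys * w (pv ys) j"
proof (induction n arbitrary: ys j)
  case 0 thus ?case by simp
next
  case (Suc n)
  then obtain ys' y where ys: "ys = ys' @ [y]" and l: "length ys' = n"
    by (metis length_Suc_conv_rev)
  let ?F = "\<lambda>k. (\<Sum>xs\<in>blists n. fw (w False) M xs k * chan_prob a b xs ys')"
  have "(\<Sum>xs\<in>blists (Suc n). fw (w False) M xs j * chan_prob a b xs ys) =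
      (\<Sum>xs\<in>blists n. post_W a b (pv ys') False y * (fw (w False) M xs False * chan_prob a b xs ys' * M False False j
             + fw (w False) M xs True * chan_prob a b xs ys' * M False True j)
        + post_W a b (pv ys') True y * (fw (w False) M xs False * chan_prob a b xs ys' * M True False j
             + fw (w False) M xs True * chan_prob a b xs ys' * M True True j))"
    unfolding sum_blists_Suc ys
  proof (intro sum.cong refl)
    fix xs assume "xs \<in> blists n"
    hence lx: "length xs = length ys'" using l by (simp add: blists_len)
    show "fw (w False) M (xs @ [False]) j * chan_prob a b (xs @ [False]) (ys' @ [y]) +
          fw (w False) M (xs @ [True]) j * chan_prob a b (xs @ [True]) (ys' @ [y]) =
      post_W a b (pv ys') False y * (fw (w False) M xs False * chan_prob a b xs ys' * M False False j
             + fw (w False) M xs True * chan_prob a b xs ys' * M False True j)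
        + post_W a b (pv ys') True y * (fw (w False) M xs False * chan_prob a b xs ys' * M True False j
             + fw (w False) M xs True * chan_prob a b xs ys' * M True True j)"
      unfolding chan_snoc[OF lx] fw_snoc by (simp add: vm_def algebra_simps)
  qed
  also have "\<dots> = post_W a b (pv ys') False y * (?F False * M False False j + ?F True * M False True j)
       + post_W a b (pv ys') True y * (?F False * M True False j + ?F True * M True True j)"
    by (simp only: distrib_left sum.distrib sum_distrib_left sum_distrib_right mult.assoc)
  also have "\<dots> = Qn g ys' * (post_W a b (pv ys') False y * vm (w (pv ys')) (M False) j
       + post_W a b (pv ys') True y * vm (w (pv ys')) (M True) j)"
    using Suc.IH[OF l] by (simp add: vm_def algebra_simps)
  also have "\<dots> = Qn g ys * w (pv ys) j" by (simp add: it ys Qn_snoc)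
  finally show ?case .
qed

lemma hmm_info:
  assumes D: "\<And>s x. Dv s x = C"
    and it: "\<And>s y j. post_W a b s False y * vm (w s) (M False) j + post_W a b s True y * vm (w s) (M True) j
      = Qs g s y * w y j"
    and row: "\<And>i. M False i False + M False i True + M True i False + M True i True = 1"
    and tot: "\<And>s. w s False + w s True = 1"
    and wn: "\<And>j. w False j \<ge> 0" and Mn: "\<And>x i j. M x i j \<ge> 0"
  shows "\<exists>p. input_dist n p \<and> mutual_info_nf a b n p = n * C"
proof -
  define p where "p = (\<lambda>xs. fw (w False) M xs False + fw (w False) M xs True)"
  have pn: "\<And>xs. p xs \<ge> 0" unfolding p_def using fw_nonneg[OF wn Mn] by (simp add: add_nonneg_nonneg)
  have ip: "input_dist n p" unfolding input_dist_def
    using pn hmm_sum[where M=M and n=n and v="w False", OF row] tot[of False] by (simp add: p_def)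
  have out: "out_nf a b n p ys = Qn g ys" if "length ys = n" for ys
  proof -
    have "out_nf a b n p ys = (\<Sum>xs\<in>blists n. fw (w False) M xs False * chan_prob a b xs ys)
            + (\<Sum>xs\<in>blists n. fw (w False) M xs True * chan_prob a b xs ys)"
      unfolding out_nf_def p_def by (simp add: sum.distrib algebra_simps)
    also have "\<dots> = Qn g ys * (w (pv ys) False + w (pv ys) True)"
      using hmm_out[OF it that] by (simp add: algebra_simps)
    finally show ?thesis using tot by simp
  qed
  have "mutual_info_nf a b n p = (\<Sum>xs\<in>blists n. \<Sum>ys\<in>blists n.
        p xs * chan_prob a b xs ys * log 2 (chan_prob a b xs ys / Qn g ys))"
    unfolding mutual_info_nf_def
    using exact_info[where E="\<lambda>xs ys. p xs"] pn
    by (intro sum.cong refl) (simp add: out blists_len)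
  also have "\<dots> = n * C" by (rule nf_sumlog[OF D ip])
  finally show ?thesis using ip by blast
qed

end


definition P1 where "P1 a b g be = (1-b)*be^2 - g*((1-a)+b)*be + a"
definition P2 where "P2 a b g be = b*g*be^2 - (a+(1-b))*be + (1-a)*g"
definition P3 where "P3 a b g be = a*be^2 - g*((1-a)+b)*be + (1-b)"
definition P4 where "P4 a b g be = (1-a)*g*be^2 - (a+(1-b))*be + b*g"

definition Mb :: "real \<Rightarrow> real \<Rightarrow> real \<Rightarrow> real \<Rightarrow> bool \<Rightarrow> bool \<Rightarrow> bool \<Rightarrow> real" where
  "Mb a b g be x i j = (let c = 1 / ((1+g)*(a+b-1)*(be^2-1)) in
     (if \<not>x then (if \<not>i then (if \<not>j then c * P2 a b g be else - c * P1 a b g be)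
                         else (if \<not>j then c * P3 a b g be else - c * P4 a b g be))
            else (if \<not>i then (if \<not>j then - c * P4 a b g be else c * P3 a b g be)
                         else (if \<not>j then - c * P1 a b g be else c * P2 a b g be))))"

definition wb :: "real \<Rightarrow> bool \<Rightarrow> bool \<Rightarrow> real" where
  "wb be s j = (if s = j then be / (1 + be) else 1 / (1 + be))"

lemma Mb_inter:
  fixes a b g be :: real
  assumes "a + b > 1" "g > 0" "be > 1"
  shows "post_W a b s False y * vm (wb be s) (Mb a b g be False) j + post_W a b s True y * vm (wb be s) (Mb a b g be True) j
      = Qs g s y * wb be y j"
proof -
  have d: "a + b - 1 \<noteq> 0" "1 + g \<noteq> 0" "be^2 - 1 \<noteq> 0" "1 + be \<noteq> 0" using assms by (auto simp: power2_eq_square)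
     (smt (verit) mult_less_cancel_left1)
  show ?thesis
    using d apply (cases s; cases y; cases j)
    apply (simp_all add: post_W_def vm_def Qs_def wb_def Mb_def Let_def P1_def P2_def P3_def P4_def divide_simps)
    apply (simp_all add: power2_eq_square algebra_simps)
    done
qed


lemma Mb_row:
  fixes a b g be :: real
  assumes "a + b > 1" "g > 0" "be > 1"
  shows "Mb a b g be False i False + Mb a b g be False i True + Mb a b g be True i False + Mb a b g be True i True = 1"
proof -
  have d: "a + b - 1 \<noteq> 0" "1 + g \<noteq> 0" "be^2 - 1 \<noteq> 0" using assms by (auto simp: power2_eq_square)
     (smt (verit) mult_less_cancel_left1)
  show ?thesis using d apply (cases i)
    apply (simp_all add: Mb_def Let_def P1_def P2_def P3_def P4_def divide_simps)
    apply (simp_all add: power2_eq_square algebra_simps)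
    done
qed

lemma Mb_nonneg:
  fixes a b g be :: real
  assumes "a + b > 1" "g > 0" "be > 1" "P1 a b g be \<le> 0" "P2 a b g be \<ge> 0" "P3 a b g be \<ge> 0" "P4 a b g be \<le> 0"
  shows "Mb a b g be x i j \<ge> 0"
proof -
  have "be^2 > 1" using assms by (smt (verit) one_less_power zero_less_numeral)
  hence c: "(1+g)*(a+b-1)*(be^2-1) > 0" using assms by simp
  show ?thesis using c assms unfolding Mb_def Let_def
    by (auto intro: divide_nonpos_pos divide_nonneg_pos)
qed

definition M1 :: "bool \<Rightarrow> bool \<Rightarrow> bool \<Rightarrow> real" where "M1 x i j = (if i = j then 1/2 else 0)"
definition w1 :: "bool \<Rightarrow> bool \<Rightarrow> real" where "w1 s j = 1/2"

lemma M1_inter: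
  fixes a b g :: real
  assumes "g > 0" "g * ((1-a)+b) = a + (1-b)" "a \<le> 1" "b > 0"
  shows "post_W a b s False y * vm (w1 s) (M1 False) j + post_W a b s True y * vm (w1 s) (M1 True) j
      = Qs g s y * w1 y j"
proof -
  have nz: "(1-a)+b \<noteq> 0" using assms by simp
  have g: "g = (a + (1-b)) / ((1-a)+b)" "(1-a)+b \<noteq> 0" using assms nz by (auto simp: eq_divide_eq)
  have gp: "2 + g * 2 \<noteq> 0" using assms by simp
  show ?thesis using g gp apply (cases s; cases y; cases j)
    apply (simp_all add: post_W_def vm_def Qs_def w1_def M1_def Let_def divide_simps)
    apply (simp_all add: algebra_simps)
    done
qed

definition pistar :: "real \<Rightarrow> real \<Rightarrow> real \<Rightarrow> real" where
  "pistar a b g = (1 / (1 + g) - (1 - a)) / (a + b - 1)"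

lemma pistar_eq:
  fixes a b g :: real
  assumes "a + b > 1" "g > 0"
  shows "(1 - (if s then 1 - pistar a b g else pistar a b g)) * post_W a b s False y
                    + (if s then 1 - pistar a b g else pistar a b g) * post_W a b s True y = Qs g s y"
proof -
  have d: "a + b - 1 \<noteq> 0" "1 + g \<noteq> 0" using assms by auto
  show ?thesis using d apply (cases s; cases y)
    apply (simp_all add: post_W_def Qs_def pistar_def Let_def divide_simps)
    apply (simp_all add: algebra_simps)
    done
qed

lemma pistar_01:
  fixes a b g :: real
  assumes "a + b > 1" "g > 0" "(1-a)*g \<le> a" "(1-b) \<le> b*g"
  shows "0 \<le> pistar a b g" "pistar a b g \<le> 1"
proof -
  have "1 - a \<le> 1 / (1+g)" using assms by (simp add: field_simps)
  thus "0 \<le> pistar a b g" using assms unfolding pistar_def by simp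
  have "1 / (1+g) \<le> b" using assms by (simp add: field_simps)
  hence "1 / (1+g) - (1 - a) \<le> 1 * (a + b - 1)" by simp
  thus "pistar a b g \<le> 1" using assms unfolding pistar_def by (subst divide_le_eq) simp
qed


lemma I1:
  fixes a b g be :: real
  assumes "0<a" "a<1" "0<b" "b<1" "g>0" "be \<ge> 1" "(1-a)*g \<le> (1-b)*be" "P1 a b g be \<le> 0"
  shows "P2 a b g be \<ge> 0"
proof -
  have id: "(1-a)*g*P1 a b g be + (1-b)*P2 a b g be = ((1-b)*be - (1-a)*g) * (g*((1-a)+b)*be - (a+(1-b)))"
    unfolding P1_def P2_def by (simp add: algebra_simps power2_eq_square)
  have "be^2 \<ge> 1" using assms by (simp add: one_le_power)
  hence "(1-b)*be^2 \<ge> (1-b)" using assms by simp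
  hence "g*((1-a)+b)*be - (a+(1-b)) \<ge> 0" using assms(8) unfolding P1_def by linarith
  hence "((1-b)*be - (1-a)*g) * (g*((1-a)+b)*be - (a+(1-b))) \<ge> 0" using assms by simp
  moreover have "(1-a)*g*P1 a b g be \<le> 0" using assms by (simp add: mult_nonneg_nonpos)
  ultimately have "(1-b)*P2 a b g be \<ge> 0" using id by linarith
  thus ?thesis using assms by (simp add: zero_le_mult_iff)
qed

lemma I2:
  fixes a b g be :: real
  assumes "0<a" "a<1" "0<b" "b<1" "g>0" "be \<ge> 1" "(1-b)*be \<le> (1-a)*g" "P2 a b g be \<ge> 0"
  shows "P1 a b g be \<le> 0"
proof -
  have id: "(1-a)*g*P1 a b g be + (1-b)*P2 a b g be = ((1-b)*be - (1-a)*g) * (g*((1-a)+b)*be - (a+(1-b)))"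
    unfolding P1_def P2_def by (simp add: algebra_simps power2_eq_square)
  have p2: "g*(b*be^2 + (1-a)) \<ge> (a+(1-b))*be" using assms(8) unfolding P2_def by (simp add: algebra_simps)
  have "be^2 \<ge> 1" using assms by (simp add: one_le_power)
  have s: "((1-a)+b)*be \<ge> 0" using assms by simp
  have e1: "(g*((1-a)+b)*be - (a+(1-b))) * (b*be^2 + (1-a))
      = ((1-a)+b)*be * (g*(b*be^2 + (1-a))) - (a+(1-b))*(b*be^2 + (1-a))" by (simp add: algebra_simps)
  have e2: "((1-a)+b)*be * (g*(b*be^2 + (1-a))) \<ge> ((1-a)+b)*be * ((a+(1-b))*be)"
    using mult_left_mono[OF p2 s] .
  have e3: "((1-a)+b)*be * ((a+(1-b))*be) - (a+(1-b))*(b*be^2 + (1-a)) = (a+(1-b))*(1-a)*(be^2 - 1)"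
    by (simp add: algebra_simps power2_eq_square)
  have e4: "(a+(1-b))*(1-a)*(be^2 - 1) \<ge> 0" using assms \<open>be^2 \<ge> 1\<close> by simp
  have "(g*((1-a)+b)*be - (a+(1-b))) * (b*be^2 + (1-a)) \<ge> 0" using e1 e2 e3 e4 by linarith
  moreover have "b*be^2 + (1-a) > 0" using assms by (simp add: add_nonneg_pos)
  ultimately have "g*((1-a)+b)*be - (a+(1-b)) \<ge> 0" by (simp add: zero_le_mult_iff)
  hence "((1-b)*be - (1-a)*g) * (g*((1-a)+b)*be - (a+(1-b))) \<le> 0" using assms by (simp add: mult_nonpos_nonneg)
  moreover have "(1-b)*P2 a b g be \<ge> 0" using assms by simp
  ultimately have "(1-a)*g*P1 a b g be \<le> 0" using id by linarith
  moreover have "(1-a)*g > 0" using assms by simp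
  ultimately show ?thesis by (smt (verit) mult_pos_pos)
qed

lemma I3:
  fixes a b g be :: real
  assumes "0<a" "a<1" "0<b" "b<1" "g>0" "be \<ge> 1" "a*be \<le> b*g" "P3 a b g be \<ge> 0"
  shows "P4 a b g be \<le> 0"
proof -
  have p3: "g*((1-a)+b)*be \<le> a*be^2 + (1-b)" using assms(8) unfolding P3_def by simp
  have s: "((1-a)+b)*be > 0" using assms by simp
  have "a*((1-a)+b)*be^2 = (a*be)*(((1-a)+b)*be)" by (simp add: power2_eq_square algebra_simps)
  also have "\<dots> \<le> (b*g)*(((1-a)+b)*be)" using mult_right_mono[OF assms(7)] s by simp
  also have "\<dots> = b*(g*((1-a)+b)*be)" by (simp add: algebra_simps)
  also have "\<dots> \<le> b*(a*be^2 + (1-b))" using p3 assms by simp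
  finally have k: "a*(1-a)*be^2 \<le> b*(1-b)" by (simp add: algebra_simps)
  have q: "(1-a)*be^2 + b \<ge> 0" using assms by simp
  have "((1-a)+b)*be * P4 a b g be = (g*((1-a)+b)*be)*((1-a)*be^2 + b) - (a+(1-b))*((1-a)+b)*be^2"
    unfolding P4_def by (simp add: algebra_simps power2_eq_square)
  also have "\<dots> \<le> (a*be^2 + (1-b))*((1-a)*be^2 + b) - (a+(1-b))*((1-a)+b)*be^2"
    using mult_right_mono[OF p3 q] by linarith
  also have "\<dots> = - (be^2 - 1)*(b*(1-b) - a*(1-a)*be^2)" by (simp add: algebra_simps power2_eq_square)
  also have "\<dots> \<le> 0"
  proof -
    have "be^2 \<ge> 1" using assms by (simp add: one_le_power)
    thus ?thesis using k by (intro mult_nonpos_nonneg) auto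
  qed
  finally show ?thesis using s by (smt (verit) mult_pos_pos)
qed

lemma I4:
  fixes a b g be :: real
  assumes "0<a" "a<1" "0<b" "b<1" "g>0" "be \<ge> 1" "b*g \<le> a*be" "P4 a b g be \<le> 0"
  shows "P3 a b g be \<ge> 0"
proof -
  have s: "((1-a)+b)*be > 0" using assms by simp
  have "g*((1-a)+b)*be \<le> a*be^2 + (1-b)"
  proof (cases "a*(1-a)*be^2 \<ge> b*(1-b)")
    case True
    have p4: "g*((1-a)*be^2 + b) \<le> (a+(1-b))*be" using assms(8) unfolding P4_def by (simp add: algebra_simps)
    have q: "(1-a)*be^2 + b > 0" using assms by (simp add: add_nonneg_pos)
    have "(g*((1-a)+b)*be)*((1-a)*be^2 + b) = (((1-a)+b)*be) * (g*((1-a)*be^2 + b))" by (simp add: algebra_simps)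
    also have "\<dots> \<le> (((1-a)+b)*be) * ((a+(1-b))*be)" using mult_left_mono[OF p4] s by simp
    also have "\<dots> = (a*be^2 + (1-b))*((1-a)*be^2 + b) - (be^2 - 1)*(a*(1-a)*be^2 - b*(1-b))"
      by (simp add: algebra_simps power2_eq_square)
    also have "\<dots> \<le> (a*be^2 + (1-b))*((1-a)*be^2 + b)" using True assms by (simp add: one_le_power)
    finally show ?thesis using q by simp
  next
    case False
    have "b*(g*((1-a)+b)*be) = (b*g)*(((1-a)+b)*be)" by (simp add: algebra_simps)
    also have "\<dots> \<le> (a*be)*(((1-a)+b)*be)" using mult_right_mono[OF assms(7)] s by simp
    also have "\<dots> = a*(1-a)*be^2 + a*b*be^2" by (simp add: algebra_simps power2_eq_square)
    also have "\<dots> \<le> b*(a*be^2 + (1-b))" using False by (simp add: algebra_simps)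
    finally show ?thesis using assms by simp
  qed
  thus ?thesis unfolding P3_def by simp
qed



lemma quad_between:
  fixes A B C D x :: real
  assumes "A > 0" "D = B^2 - 4*A*C" "D \<ge> 0" "(B - sqrt D)/(2*A) \<le> x" "x \<le> (B + sqrt D)/(2*A)"
  shows "A*x^2 - B*x + C \<le> 0"
proof -
  have "B - sqrt D \<le> 2*A*x" "2*A*x \<le> B + sqrt D" using assms by (simp_all add: pos_divide_le_eq pos_le_divide_eq mult.commute)
  hence "\<bar>2*A*x - B\<bar> \<le> sqrt D" by linarith
  hence "\<bar>2*A*x - B\<bar>^2 \<le> (sqrt D)^2" by (intro power_mono) auto
  hence "(2*A*x - B)^2 \<le> D" using assms by simp
  hence "4*A*(A*x^2 - B*x + C) \<le> 0" using assms(2) by (simp add: algebra_simps power2_eq_square)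
  thus ?thesis using assms by (simp add: mult_le_0_iff)
qed

lemma quad_hi:
  fixes A B C D x :: real
  assumes "A > 0" "D = B^2 - 4*A*C" "D \<ge> 0" "(B + sqrt D)/(2*A) \<le> x"
  shows "A*x^2 - B*x + C \<ge> 0"
proof -
  have "sqrt D \<le> 2*A*x - B" using assms by (simp add: pos_divide_le_eq mult.commute)
  hence "(sqrt D)^2 \<le> (2*A*x - B)^2" using assms(3) by (intro power_mono) auto
  hence "D \<le> (2*A*x - B)^2" using assms by simp
  hence "4*A*(A*x^2 - B*x + C) \<ge> 0" using assms(2) by (simp add: algebra_simps power2_eq_square)
  thus ?thesis using assms by (simp add: zero_le_mult_iff)
qed

lemma quad_lo:
  fixes A B C D x :: real
  assumes "A > 0" "D = B^2 - 4*A*C" "D \<ge> 0" "x \<le> (B - sqrt D)/(2*A)"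
  shows "A*x^2 - B*x + C \<ge> 0"
proof -
  have "sqrt D \<le> B - 2*A*x" using assms by (simp add: pos_le_divide_eq mult.commute)
  hence "(sqrt D)^2 \<le> (B - 2*A*x)^2" using assms(3) by (intro power_mono) auto
  hence "D \<le> (B - 2*A*x)^2" using assms by simp
  hence "4*A*(A*x^2 - B*x + C) \<ge> 0" using assms(2) by (simp add: algebra_simps power2_eq_square)
  thus ?thesis using assms by (simp add: zero_le_mult_iff)
qed

lemma hyp_extract:
  fixes a b be :: real
  defines "g \<equiv> post_gamma a b"
  assumes "0 \<le> a" "a \<le> 1" "0 \<le> b" "b \<le> 1" "a + b > 1"
    and be: "be \<in> (L1 a b \<union> L2 a b \<union> L3 a b) \<inter> (L4 a b \<union> L5 a b \<union> L6 a b) \<inter> L0 a b"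
  shows "0 < a \<and> a < 1 \<and> 0 < b \<and> b < 1 \<and> 1 \<le> be \<and> (1-a)*g \<le> a \<and> 1-b \<le> b*g \<and>
     P1 a b g be \<le> 0 \<and> P2 a b g be \<ge> 0 \<and> P3 a b g be \<ge> 0 \<and> P4 a b g be \<le> 0"
proof -
  have g0: "g > 0" unfolding g_def post_gamma_def by simp
  have L0: "(1-a)*g \<noteq> 0" "1-b \<noteq> 0" "1 \<le> be" "be \<le> a/((1-a)*g)" "be \<le> b*g/(1-b)"
    using be unfolding L0_def Let_def g_def by auto
  have a1: "a < 1" using L0(1) assms by auto
  have b1: "b < 1" using L0(2) assms by auto
  have a0: "0 < a" using assms b1 by linarith
  have b0: "0 < b" using assms a1 by linarith
  have ag: "(1-a)*g > 0" using a1 g0 by simp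
  have "be * ((1-a)*g) \<le> a" using L0(4) ag by (simp add: pos_le_divide_eq)
  moreover have "(1-a)*g \<le> be * ((1-a)*g)" using mult_right_mono[OF L0(3), of "(1-a)*g"] ag by simp
  ultimately have A: "(1-a)*g \<le> a" by linarith
  have "be * (1-b) \<le> b*g" using L0(5) b1 by (simp add: pos_le_divide_eq)
  moreover have "(1-b) \<le> be * (1-b)" using mult_right_mono[OF L0(3), of "1-b"] b1 by simp
  ultimately have B: "1-b \<le> b*g" by linarith
  note basic = a0 a1 b0 b1 g0 L0(3)
  have D1: "D1 a b = (g*((1-a)+b))^2 - 4*(1-b)*a" unfolding D1_def g_def by (simp add: power_mult_distrib)
  have D1': "D1 a b = (g*((1-a)+b))^2 - 4*a*(1-b)" unfolding D1_def g_def by (simp add: power_mult_distrib)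
  have D2: "D2 a b = (a+(1-b))^2 - 4*(b*g)*((1-a)*g)" unfolding D2_def g_def by (simp add: power2_eq_square algebra_simps)
  have D2': "D2 a b = (a+(1-b))^2 - 4*((1-a)*g)*(b*g)" unfolding D2_def g_def by (simp add: power2_eq_square algebra_simps)
  have e1: "\<And>x. 2 * (b*g) = x \<Longrightarrow> x = 2*b*g" by simp
  have P12: "P1 a b g be \<le> 0 \<and> P2 a b g be \<ge> 0"
  proof -
    consider "be \<in> L1 a b" | "be \<in> L2 a b" | "be \<in> L3 a b" using be by blast
    thus ?thesis
    proof cases
      case 1
      hence h: "D1 a b \<ge> 0" "(1-a)/(1-b)*g \<le> be" "(g*((1-a)+b) - sqrt (D1 a b))/(2*(1-b)) \<le> be"
        "be \<le> (g*((1-a)+b) + sqrt (D1 a b))/(2*(1-b))"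
        unfolding L1_def Let_def g_def by auto
      have p1: "P1 a b g be \<le> 0"
        using quad_between[OF _ D1 h(1) h(3) h(4)] b1 unfolding P1_def by simp
      have k: "(1-a)*g \<le> (1-b)*be" using h(2) b1 by (simp add: pos_divide_le_eq mult.commute)
      show ?thesis using I1[OF basic k p1] p1 by simp
    next
      case 2
      hence h: "D2 a b \<ge> 0" "be \<le> (1-a)/(1-b)*g" "((a+(1-b)) + sqrt (D2 a b))/(2*(b*g)) \<le> be"
        unfolding L2_def Let_def g_def by (auto simp: mult.assoc)
      have p2: "P2 a b g be \<ge> 0"
        using quad_hi[OF _ D2 h(1) h(3)] b0 g0 unfolding P2_def by (simp add: algebra_simps)
      have k: "(1-b)*be \<le> (1-a)*g" using h(2) b1 by (simp add: pos_le_divide_eq mult.commute)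
      show ?thesis using I2[OF basic k p2] p2 by simp
    next
      case 3
      hence h: "D2 a b \<ge> 0" "be \<le> (1-a)/(1-b)*g" "be \<le> ((a+(1-b)) - sqrt (D2 a b))/(2*(b*g))"
        unfolding L3_def Let_def g_def by (auto simp: mult.assoc)
      have p2: "P2 a b g be \<ge> 0"
        using quad_lo[OF _ D2 h(1) h(3)] b0 g0 unfolding P2_def by (simp add: algebra_simps)
      have k: "(1-b)*be \<le> (1-a)*g" using h(2) b1 by (simp add: pos_le_divide_eq mult.commute)
      show ?thesis using I2[OF basic k p2] p2 by simp
    qed
  qed
  have P34: "P3 a b g be \<ge> 0 \<and> P4 a b g be \<le> 0"
  proof -
    consider "be \<in> L4 a b" | "be \<in> L5 a b" | "be \<in> L6 a b" using be by blast
    thus ?thesis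
    proof cases
      case 1
      hence h: "D1 a b \<ge> 0" "be \<le> b*g/a" "be \<le> (g*((1-a)+b) - sqrt (D1 a b))/(2*a)"
        unfolding L4_def Let_def g_def by auto
      have p3: "P3 a b g be \<ge> 0"
        using quad_lo[OF _ D1' h(1) h(3)] a0 unfolding P3_def by simp
      have k: "a*be \<le> b*g" using h(2) a0 by (simp add: pos_le_divide_eq mult.commute)
      show ?thesis using I3[OF basic k p3] p3 by simp
    next
      case 2
      hence h: "D1 a b \<ge> 0" "be \<le> b*g/a" "(g*((1-a)+b) + sqrt (D1 a b))/(2*a) \<le> be"
        unfolding L5_def Let_def g_def by auto
      have p3: "P3 a b g be \<ge> 0"
        using quad_hi[OF _ D1' h(1) h(3)] a0 unfolding P3_def by simp
      have k: "a*be \<le> b*g" using h(2) a0 by (simp add: pos_le_divide_eq mult.commute)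
      show ?thesis using I3[OF basic k p3] p3 by simp
    next
      case 3
      hence h0: "D2 a b \<ge> 0" "b*g/a \<le> be" "((a+(1-b)) - sqrt (D2 a b))/((2 - 2*a)*g) \<le> be"
        "be \<le> ((a+(1-b)) + sqrt (D2 a b))/((2 - 2*a)*g)"
        unfolding L6_def Let_def g_def by auto
      have ee: "2*((1-a)*g) = (2 - 2*a)*g" by (simp add: algebra_simps)
      have h: "D2 a b \<ge> 0" "b*g/a \<le> be" "((a+(1-b)) - sqrt (D2 a b))/(2*((1-a)*g)) \<le> be"
        "be \<le> ((a+(1-b)) + sqrt (D2 a b))/(2*((1-a)*g))" using h0 unfolding ee by auto
      have p4: "P4 a b g be \<le> 0"
        using quad_between[OF _ D2' h(1) h(3) h(4)] ag unfolding P4_def by (simp add: algebra_simps)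
      have k: "b*g \<le> a*be" using h(2) a0 by (simp add: pos_divide_le_eq mult.commute)
      show ?thesis using I4[OF basic k p4] p4 by simp
    qed
  qed
  show ?thesis using a0 a1 b0 b1 L0(3) A B P12 P34 by simp
qed



context pc begin

lemma equalizer:
  assumes gdef: "g = post_gamma a b"
  shows "Dv s x = Dv False False"
proof -
  define q0 where "q0 = g / (1 + g)"
  define q1 where "q1 = 1 / (1 + g)"
  have q0p: "q0 > 0" and q1p: "q1 > 0" using g0 by (auto simp: q0_def q1_def)
  have "q0 = g * q1" by (simp add: q0_def q1_def)
  hence lq: "log 2 q0 = log 2 g + log 2 q1" using g0 q1p by (simp add: log_mult)
  have lg: "log 2 g = (bin_ent b - bin_ent a) / (a + b - 1)"
    unfolding gdef post_gamma_def by simp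
  have dd: "a + b - 1 \<noteq> 0" using ab by simp
  have key: "(a + b - 1) * log 2 g = bin_ent b - bin_ent a" using lg dd by simp
  have Ha: "bin_ent a = - a * log 2 a - (1 - a) * log 2 (1 - a)" using a0 a1 by (simp add: bin_ent_def)
  have Hb: "bin_ent b = - b * log 2 b - (1 - b) * log 2 (1 - b)" using b0 b1 by (simp add: bin_ent_def)
  have pa: "a > 0" "1 - a > 0" "b > 0" "1 - b > 0" using a0 a1 b0 b1 by auto
  have DFF: "Dv False False = a * (log 2 a - log 2 q0) + (1-a) * (log 2 (1-a) - log 2 q1)"
    unfolding Dv_def post_W_def Qs_def Let_def q0_def[symmetric] q1_def[symmetric]
    using pa q0p q1p by (simp add: log_divide)
  have DFT: "Dv False True = (1-b) * (log 2 (1-b) - log 2 q0) + b * (log 2 b - log 2 q1)"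
    unfolding Dv_def post_W_def Qs_def Let_def q0_def[symmetric] q1_def[symmetric]
    using pa q0p q1p by (simp add: log_divide)
  have DTF: "Dv True False = Dv False True"
    unfolding Dv_def post_W_def Qs_def Let_def by (simp add: algebra_simps)
  have DTT: "Dv True True = Dv False False"
    unfolding Dv_def post_W_def Qs_def Let_def by (simp add: algebra_simps)
  have "Dv False True - Dv False False = (bin_ent a - bin_ent b) + (a + b - 1) * (log 2 q0 - log 2 q1)"
    unfolding DFF DFT Ha Hb by (simp add: algebra_simps)
  also have "\<dots> = 0" using lq key by (simp add: algebra_simps)
  finally have "Dv False True = Dv False False" by simp
  thus ?thesis using DTF DTT by (cases s; cases x) auto
qed

end

theorem lemma7:
  fixes a b :: real
  assumes "0 \<le> a" "a \<le> 1" "0 \<le> b" "b \<le> 1" "a + b > 1"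
    and "(L1 a b \<union> L2 a b \<union> L3 a b) \<inter> (L4 a b \<union> L5 a b \<union> L6 a b) \<inter> L0 a b \<noteq> {}"
  shows "convergent (post_Cnf_n a b) \<and> convergent (post_Cfb_n a b) \<and>
         post_capacity_nf a b = post_capacity_fb a b"
proof -
  define g where "g = post_gamma a b"
  obtain be where be: "be \<in> (L1 a b \<union> L2 a b \<union> L3 a b) \<inter> (L4 a b \<union> L5 a b \<union> L6 a b) \<inter> L0 a b"
    using assms(6) by blast
  have h: "0 < a \<and> a < 1 \<and> 0 < b \<and> b < 1 \<and> 1 \<le> be \<and> (1-a)*g \<le> a \<and> 1-b \<le> b*g \<and>
     P1 a b g be \<le> 0 \<and> P2 a b g be \<ge> 0 \<and> P3 a b g be \<ge> 0 \<and> P4 a b g be \<le> 0"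
    using hyp_extract[OF assms(1-5) be] unfolding g_def .
  have g0: "g > 0" unfolding g_def post_gamma_def by simp
  interpret pc a b g using h g0 assms(5) by unfold_locales auto
  define C where "C = Dv False False"
  have D: "\<And>s x. Dv s x = C" unfolding C_def using equalizer g_def by blast
  have hmm: "\<exists>p. input_dist n p \<and> mutual_info_nf a b n p = n * C" for n
  proof (cases "be = 1")
    case False
    hence be1: "be > 1" using h by simp
    show ?thesis
    proof (rule hmm_info[OF D])
      show "\<And>s y j. post_W a b s False y * vm (wb be s) (Mb a b g be False) j + post_W a b s True y * vm (wb be s) (Mb a b g be True) j
        = Qs g s y * wb be y j" by (rule Mb_inter) (use ab g0 be1 in auto)
      show "\<And>i. Mb a b g be False i False + Mb a b g be False i True + Mb a b g be True i False + Mb a b g be True i True = 1"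
        by (rule Mb_row) (use ab g0 be1 in auto)
      show "\<And>s. wb be s False + wb be s True = 1" using be1 by (auto simp: wb_def field_simps)
      show "\<And>j. wb be False j \<ge> 0" using be1 by (auto simp: wb_def)
      show "\<And>x i j. Mb a b g be x i j \<ge> 0" by (rule Mb_nonneg) (use ab g0 be1 h in auto)
    qed
  next
    case True
    have "g * ((1-a)+b) = a + (1-b)" using h True unfolding P1_def P3_def by simp
    show ?thesis
    proof (rule hmm_info[OF D])
      show "\<And>s y j. post_W a b s False y * vm (w1 s) (M1 False) j + post_W a b s True y * vm (w1 s) (M1 True) j
        = Qs g s y * w1 y j" by (rule M1_inter) (use g0 \<open>g * ((1-a)+b) = a + (1-b)\<close> h in auto)
      show "\<And>i. M1 False i False + M1 False i True + M1 True i False + M1 True i True = 1"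
        by (auto simp: M1_def)
      show "\<And>s. w1 s False + w1 s True = 1" by (auto simp: w1_def)
      show "\<And>j. w1 False j \<ge> 0" by (auto simp: w1_def)
      show "\<And>x i j. M1 x i j \<ge> 0" by (auto simp: M1_def)
    qed
  qed
  have pi01: "0 \<le> pistar a b g" "pistar a b g \<le> 1" using pistar_01[OF ab g0] h by auto
  have pieq: "\<And>s y. (1 - (if s then 1 - pistar a b g else pistar a b g)) * post_W a b s False y
                    + (if s then 1 - pistar a b g else pistar a b g) * post_W a b s True y = Qs g s y"
    using pistar_eq[OF ab g0] .
  have nf: "post_Cnf_n a b n = C" if "n > 0" for n
    unfolding post_Cnf_n_def
  proof (rule cSup_eq_maximum)
    obtain p where p: "input_dist n p" "mutual_info_nf a b n p = n * C" using hmm by blast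
    show "C \<in> {mutual_info_nf a b n p / real n |p. input_dist n p}"
      using p that by (intro CollectI exI[of _ p]) simp
    fix x assume "x \<in> {mutual_info_nf a b n p / real n |p. input_dist n p}"
    then obtain p where "input_dist n p" "x = mutual_info_nf a b n p / n" by blast
    thus "x \<le> C" using nf_ub[OF D, where n=n and p=p] that by (simp add: divide_le_eq mult.commute)
  qed
  have fb: "post_Cfb_n a b n = C" if "n > 0" for n
    unfolding post_Cfb_n_def
  proof (rule cSup_eq_maximum)
    show "C \<in> {directed_info_fb a b n q / real n |q. fb_policy q}"
      using qstar_info(2)[OF D pi01 pieq, where n=n] qstar_info(1)[OF D pi01 pieq] that by (intro CollectI exI[of _ "qstar (pistar a b g)"]) simp
    fix x assume "x \<in> {directed_info_fb a b n q / real n |q. fb_policy q}"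
    then obtain q where "fb_policy q" "x = directed_info_fb a b n q / n" by blast
    thus "x \<le> C" using fb_ub[OF D, where q=q and n=n] that by (simp add: divide_le_eq mult.commute)
  qed
  have ev: "eventually (\<lambda>n. n > (0::nat)) sequentially" by (simp add: eventually_gt_at_top)
  have t1: "post_Cnf_n a b \<longlonglongrightarrow> C"
    by (rule tendsto_eventually) (rule eventually_mono[OF ev], simp add: nf)
  have t2: "post_Cfb_n a b \<longlonglongrightarrow> C"
    by (rule tendsto_eventually) (rule eventually_mono[OF ev], simp add: fb)
  show ?thesis using t1 t2 unfolding post_capacity_nf_def post_capacity_fb_def
    by (auto simp: convergent_def limI)
qed


end
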